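(* Let $d\ge1$, let $H,A\subset\mathbb{R}^d$ be nonempty, let $R>0$ and $\Delta$ be reals with $d(H,A)\ge R\ge\Delta\ge0$, and let $0\le s\le d$. Then $$\mathcal{H}^s(T_\Delta A)\ge\left(\frac{R-\Delta}{R}\right)^s\mathcal{H}^s(A),$$ with the convention $0^0:=0$ (relevant when $s=0$ and $R=\Delta$).
   Context: $\mathcal{H}^s$ denotes the $s$-dimensional outer Hausdorff measure on $\mathbb{R}^d$. $d(\cdot,\cdot)$ is Euclidean distance, $d(x,H)=\inf_{z\in H}|x-z|$ and $d(H,A)=\inf_{x\in A}d(x,H)$. Let $\bar H$ be the closure of $H$; for each $x$ let $\pi(x)\in\bar H$ be a point with $|x-\pi(x)|=d(x,H)$ (any one if several). For $\Delta\ge0$, $T_\Delta x:=x+\Delta\frac{\pi(x)-x}{|\pi(x)-x|}$ if $d(x,H)>\Delta$ and $T_\Delta x:=\pi(x)$ if $d(x,H)\le\Delta$. *)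

theory Defs
  imports "HOL-Analysis.Analysis"
begin

definition hcontrib :: "real \<Rightarrow> 'a::metric_space set \<Rightarrow> ennreal" where
  "hcontrib s U = (if U = {} then 0 else if s = 0 then 1 else ennreal (diameter U powr s))"

definition hausdorff_pre :: "real \<Rightarrow> real \<Rightarrow> 'a::metric_space set \<Rightarrow> ennreal" where
  "hausdorff_pre s \<delta> A =
     (INF U \<in> {U :: nat \<Rightarrow> 'a set. A \<subseteq> (\<Union>i. U i) \<and> (\<forall>i. bounded (U i) \<and> diameter (U i) \<le> \<delta>)}.
        (\<Sum>i. hcontrib s (U i)))"

text \<open>s-dimensional (unnormalised) outer Hausdorff measure.\<close>
definition hausdorff_outer :: "real \<Rightarrow> 'a::metric_space set \<Rightarrow> ennreal" where
  "hausdorff_outer s A = (SUP \<delta> \<in> {0<..}. hausdorff_pre s \<delta> A)"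

definition setdist_HA :: "'a::metric_space set \<Rightarrow> 'a set \<Rightarrow> real" where
  "setdist_HA H A = (INF x \<in> A. infdist x H)"

text \<open>The map T_Delta, relative to a chosen nearest-point map pi.\<close>
definition T_map :: "('a::real_normed_vector \<Rightarrow> 'a) \<Rightarrow> 'a set \<Rightarrow> real \<Rightarrow> 'a \<Rightarrow> 'a" where
  "T_map \<pi> H \<Delta> x = (if infdist x H > \<Delta> then x + (\<Delta> / norm (\<pi> x - x)) *\<^sub>R (\<pi> x - x) else \<pi> x)"

end

theory Submission
  imports Defs
begin

lemma infdist_le_closure:
  fixes H :: "'a::metric_space set"
  assumes "H \<noteq> {}" "z \<in> closure H"
  shows "infdist x H \<le> dist x z"
proof -
  have "infdist z H = 0" using assms in_closure_iff_infdist_zero by blast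
  then show ?thesis using infdist_triangle[of x H z] by simp
qed

lemma real_key:
  fixes P Q N a b R :: real
  assumes "a \<ge> R" "b \<ge> R" "R > 0" "N \<ge> 0"
    and h1: "N + 2 * P + a^2 \<ge> b^2" and h2: "N - 2 * Q + b^2 \<ge> a^2"
  shows "P / a - Q / b \<ge> - N / R"
proof -
  have a0: "a > 0" "b > 0" using assms by auto
  have "(b^2 - a^2 - N) / 2 / a \<le> P / a" using h1 a0 by (intro divide_right_mono) auto
  then have "P / a \<ge> (b^2 - a^2 - N) / (2*a)" by simp
  moreover have "Q / b \<le> (N + b^2 - a^2) / 2 / b" using h2 a0 by (intro divide_right_mono) auto
  then have "Q / b \<le> (N + b^2 - a^2) / (2*b)" by simp
  moreover have "(b^2 - a^2 - N) / (2*a) - (N + b^2 - a^2) / (2*b)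
      = (b^2-a^2)*(b-a)/(2*a*b) - N/(2*a) - N/(2*b)" using a0
    by (simp add: field_simps power2_eq_square)
  moreover have "(b^2-a^2)*(b-a)/(2*a*b) \<ge> 0"
  proof -
    have "(b^2-a^2)*(b-a) = (b+a)*(b-a)^2" by (simp add: power2_eq_square algebra_simps)
    also have "\<dots> \<ge> 0" using a0 by simp
    finally show ?thesis using a0 by simp
  qed
  moreover have "N/(2*a) \<le> N/(2*R)" using assms by (intro divide_left_mono) auto
  moreover have "N/(2*b) \<le> N/(2*R)" using assms by (intro divide_left_mono) auto
  moreover have "N/(2*R) + N/(2*R) = N/R" by simp
  ultimately show ?thesis by linarith
qed

lemma point_facts:
  fixes H A :: "'a::euclidean_space set" and \<pi> :: "'a \<Rightarrow> 'a"
    and R \<Delta> :: real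
  assumes "H \<noteq> {}"
    and pi: "\<And>x. \<pi> x \<in> closure H \<and> dist x (\<pi> x) = infdist x H"
    and "R > 0" and "setdist_HA H A \<ge> R" and "R \<ge> \<Delta>" and "\<Delta> \<ge> 0"
    and x: "x \<in> A"
  shows "infdist x H \<ge> R" "norm (\<pi> x - x) = infdist x H"
    "T_map \<pi> H \<Delta> x = x + (\<Delta> / infdist x H) *\<^sub>R (\<pi> x - x)"
proof -
  have "setdist_HA H A \<le> infdist x H" unfolding setdist_HA_def
    by (rule cINF_lower[OF _ x]) (auto intro: bdd_belowI[where m=0] simp: infdist_nonneg)
  then show R: "infdist x H \<ge> R" using assms by simp
  show n: "norm (\<pi> x - x) = infdist x H" using pi[of x] by (simp add: dist_norm norm_minus_commute)
  show "T_map \<pi> H \<Delta> x = x + (\<Delta> / infdist x H) *\<^sub>R (\<pi> x - x)"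
  proof (cases "infdist x H > \<Delta>")
    case True then show ?thesis by (simp add: T_map_def n)
  next
    case False
    then have e: "infdist x H = \<Delta>" using R assms by simp
    have "\<Delta> > 0" using e R assms by simp
    then have "x + (\<Delta> / infdist x H) *\<^sub>R (\<pi> x - x) = \<pi> x" using e by simp
    then show ?thesis using False by (simp add: T_map_def)
  qed
qed

lemma geom:
  fixes H A :: "'a::euclidean_space set" and \<pi> :: "'a \<Rightarrow> 'a"
    and R \<Delta> :: real
  assumes "H \<noteq> {}"
    and pi: "\<And>x. \<pi> x \<in> closure H \<and> dist x (\<pi> x) = infdist x H"
    and "R > 0" and "setdist_HA H A \<ge> R" and "R \<ge> \<Delta>" and "\<Delta> \<ge> 0"
    and x: "x \<in> A" and y: "y \<in> A"
  shows "((R - \<Delta>) / R) * dist x y \<le> dist (T_map \<pi> H \<Delta> x) (T_map \<pi> H \<Delta> y)"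
proof -
  note fx = point_facts[OF assms(1-6) x] and fy = point_facts[OF assms(1-6) y]
  define a where "a = infdist x H"
  define b where "b = infdist y H"
  define u where "u = \<pi> x - x"
  define v where "v = \<pi> y - y"
  define w where "w = x - y"
  have aR: "a \<ge> R" and bR: "b \<ge> R" using fx fy a_def b_def by auto
  have nu: "norm u = a" and nv: "norm v = b" using fx fy a_def b_def u_def v_def by auto
  have Tdiff: "T_map \<pi> H \<Delta> x - T_map \<pi> H \<Delta> y = w + (\<Delta>/a) *\<^sub>R u - (\<Delta>/b) *\<^sub>R v"
    unfolding fx(3) fy(3) a_def[symmetric] b_def[symmetric] u_def[symmetric] v_def[symmetric] w_def
    by (simp add: algebra_simps)
  have c1: "a \<le> norm (w - v)"
  proof -
    have "a \<le> dist x (\<pi> y)" unfolding a_def using infdist_le_closure assms(1) pi by blast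
    then show ?thesis by (simp add: w_def v_def dist_norm)
  qed
  have c2: "b \<le> norm (w + u)"
  proof -
    have "b \<le> dist y (\<pi> x)" unfolding b_def using infdist_le_closure assms(1) pi by blast
    then show ?thesis by (simp add: w_def u_def dist_norm norm_minus_commute algebra_simps)
  qed
  have a0: "a > 0" "b > 0" using aR bR assms by auto
  have vv: "inner v v = b^2" using nv power2_norm_eq_inner[of v] by simp
  have uu: "inner u u = a^2" using nu power2_norm_eq_inner[of u] by simp
  have e1: "norm (w - v)^2 = inner w w - 2 * inner w v + b^2"
    using vv by (simp add: power2_norm_eq_inner inner_diff_left inner_diff_right inner_commute)
  have e2: "norm (w + u)^2 = inner w w + 2 * inner w u + a^2"
    using uu by (simp add: power2_norm_eq_inner inner_add_left inner_add_right inner_commute)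
  have h2: "inner w w - 2 * inner w v + b^2 \<ge> a^2"
    using c1 e1 a0 by (metis power_mono less_imp_le)
  have h1: "inner w w + 2 * inner w u + a^2 \<ge> b^2"
    using c2 e2 a0 by (metis power_mono less_imp_le)
  have key: "inner w u / a - inner w v / b \<ge> - inner w w / R"
    by (rule real_key[OF aR bR assms(3) _ h1 h2]) simp
  define w' where "w' = w + (\<Delta>/a) *\<^sub>R u - (\<Delta>/b) *\<^sub>R v"
  have "inner w' w = inner w w + \<Delta> * (inner w u / a - inner w v / b)"
    by (simp add: w'_def inner_add_left inner_diff_left inner_commute algebra_simps)
  also have "\<dots> \<ge> inner w w - \<Delta> * (inner w w / R)"
    using key assms(6) mult_left_mono[OF key assms(6)] by simp
  finally have ip: "inner w' w \<ge> ((R - \<Delta>)/R) * (norm w)^2"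
    using assms(3) by (simp add: power2_norm_eq_inner field_simps)
  have "((R - \<Delta>)/R) * (norm w)^2 \<le> norm w' * norm w"
    using ip Cauchy_Schwarz_ineq2[of w' w] by linarith
  then have "((R - \<Delta>)/R) * norm w \<le> norm w'"
  proof (cases "norm w = 0")
    case True then show ?thesis by simp
  next
    case False
    have "(((R - \<Delta>)/R) * norm w) * norm w \<le> norm w' * norm w"
      using \<open>((R - \<Delta>)/R) * (norm w)^2 \<le> norm w' * norm w\<close>
      by (simp add: power2_eq_square mult.assoc)
    moreover have "norm w > 0" using False by simp
    ultimately show ?thesis by (rule mult_right_le_imp_le)
  qed
  then show ?thesis by (simp add: dist_norm Tdiff w'_def w_def)
qed

lemma pre_scale:
  fixes f :: "'a::real_normed_vector \<Rightarrow> 'a" and A :: "'a set"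
  assumes k: "k > 0" and s: "s \<ge> 0" and d: "\<delta> > 0"
    and L: "\<And>x y. x \<in> A \<Longrightarrow> y \<in> A \<Longrightarrow> k * dist x y \<le> dist (f x) (f y)"
  shows "ennreal (k powr s) * hausdorff_pre s \<delta> A \<le> hausdorff_pre s (k*\<delta>) (f ` A)"
  unfolding hausdorff_pre_def[of s "k*\<delta>"]
proof (rule INF_greatest)
  fix U assume "U \<in> {U :: nat \<Rightarrow> 'a set. f ` A \<subseteq> (\<Union>i. U i) \<and> (\<forall>i. bounded (U i) \<and> diameter (U i) \<le> k*\<delta>)}"
  then have cov: "f ` A \<subseteq> (\<Union>i. U i)" and Ub: "\<And>i. bounded (U i)" and Ud: "\<And>i. diameter (U i) \<le> k*\<delta>"
    by auto
  define V where "V i = {x\<in>A. f x \<in> U i}" for i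
  have covV: "A \<subseteq> (\<Union>i. V i)" using cov by (auto simp: V_def)
  have dV: "dist x y \<le> diameter (U i) / k" if "x \<in> V i" "y \<in> V i" for x y i
  proof -
    have "k * dist x y \<le> dist (f x) (f y)" using L that by (auto simp: V_def)
    also have "\<dots> \<le> diameter (U i)" using diameter_bounded_bound[OF Ub] that by (auto simp: V_def)
    finally show ?thesis using k by (simp add: field_simps)
  qed
  have Vb: "bounded (V i)" for i
  proof (cases "V i = {}")
    case False
    then obtain x0 where "x0 \<in> V i" by auto
    then have "V i \<subseteq> cball x0 (diameter (U i) / k)" using dV by (auto simp: mem_cball)
    then show ?thesis using bounded_cball bounded_subset by blast
  qed simp
  have dVle: "diameter (V i) \<le> diameter (U i) / k" for i
  proof (cases "V i = {}")
    case False
    then show ?thesis using dV by (intro diameter_le) (auto simp: dist_norm)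
  next
    case True
    have "diameter (U i) \<ge> 0" by (rule diameter_ge_0[OF Ub])
    then show ?thesis using True k by simp
  qed
  have dVd: "diameter (V i) \<le> \<delta>" for i
    using dVle[of i] Ud[of i] k by (smt (verit) divide_right_mono nonzero_mult_div_cancel_left)
  have hc: "ennreal (k powr s) * hcontrib s (V i) \<le> hcontrib s (U i)" for i
  proof (cases "V i = {}")
    case True then show ?thesis by (simp add: hcontrib_def)
  next
    case False
    then have Une: "U i \<noteq> {}" by (auto simp: V_def)
    show ?thesis
    proof (cases "s = 0")
      case True then show ?thesis using False Une k by (simp add: hcontrib_def)
    next
      case s0: False
      have dv0: "diameter (V i) \<ge> 0" by (rule diameter_ge_0[OF Vb])
      have "k * diameter (V i) \<le> diameter (U i)" using dVle[of i] k by (simp add: field_simps)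
      then have "(k * diameter (V i)) powr s \<le> diameter (U i) powr s"
        using s dv0 k by (intro powr_mono2) auto
      then have "k powr s * diameter (V i) powr s \<le> diameter (U i) powr s"
        using dv0 k by (simp add: powr_mult)
      then have "ennreal (k powr s * diameter (V i) powr s) \<le> ennreal (diameter (U i) powr s)"
        by (rule ennreal_leI)
      then show ?thesis using False Une s0 by (simp add: hcontrib_def ennreal_mult)
    qed
  qed
  have "hausdorff_pre s \<delta> A \<le> (\<Sum>i. hcontrib s (V i))"
    unfolding hausdorff_pre_def by (rule INF_lower) (use covV Vb dVd in auto)
  then have "ennreal (k powr s) * hausdorff_pre s \<delta> A \<le> ennreal (k powr s) * (\<Sum>i. hcontrib s (V i))"
    by (rule mult_left_mono) simp
  also have "\<dots> = (\<Sum>i. ennreal (k powr s) * hcontrib s (V i))" by simp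
  also have "\<dots> \<le> (\<Sum>i. hcontrib s (U i))"
    by (rule suminf_le[OF hc]) auto
  finally show "ennreal (k powr s) * hausdorff_pre s \<delta> A \<le> (\<Sum>i. hcontrib s (U i))" .
qed

lemma haus_scale:
  fixes f :: "'a::real_normed_vector \<Rightarrow> 'a" and A :: "'a set"
  assumes k: "k > 0" and s: "s \<ge> 0"
    and L: "\<And>x y. x \<in> A \<Longrightarrow> y \<in> A \<Longrightarrow> k * dist x y \<le> dist (f x) (f y)"
  shows "ennreal (k powr s) * hausdorff_outer s A \<le> hausdorff_outer s (f ` A)"
  unfolding hausdorff_outer_def SUP_mult_left_ennreal
proof (rule SUP_least)
  fix \<delta> :: real assume "\<delta> \<in> {0<..}"
  then have d: "\<delta> > 0" by simp
  have "ennreal (k powr s) * hausdorff_pre s \<delta> A \<le> hausdorff_pre s (k*\<delta>) (f ` A)"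
    by (rule pre_scale[OF k s d L])
  also have "\<dots> \<le> (SUP \<delta> \<in> {0<..}. hausdorff_pre s \<delta> (f ` A))"
    by (rule SUP_upper) (use k d in simp)
  finally show "ennreal (k powr s) * hausdorff_pre s \<delta> A \<le> (SUP \<delta> \<in> {0<..}. hausdorff_pre s \<delta> (f ` A))" .
qed

theorem proposition2:
  fixes H A :: "'a::euclidean_space set" and \<pi> :: "'a \<Rightarrow> 'a"
    and R \<Delta> s :: real
  assumes "H \<noteq> {}" and "A \<noteq> {}"
    and "\<And>x. \<pi> x \<in> closure H \<and> dist x (\<pi> x) = infdist x H"
    and "R > 0" and "setdist_HA H A \<ge> R" and "R \<ge> \<Delta>" and "\<Delta> \<ge> 0"
    and "0 \<le> s" and "s \<le> real DIM('a)"
  shows "hausdorff_outer s (T_map \<pi> H \<Delta> ` A)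
           \<ge> ennreal (((R - \<Delta>) / R) powr s) * hausdorff_outer s A"
proof (cases "\<Delta> = R")
  case True then show ?thesis by simp
next
  case False
  then have k: "(R - \<Delta>) / R > 0" using assms by simp
  show ?thesis
    by (rule haus_scale[OF k assms(8)]) (rule geom[OF assms(1,3-7)])
qed

end
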